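(* Suppose the true density is $g=f_\theta$ for some $\theta\in\Theta$, and the kernel satisfies $$u^{\alpha*}_\theta(y)=M f_\theta^\alpha(y)u_\theta(y)+L\quad\text{for all }y,$$ for a vector $L\in\mathbb{R}^p$ depending only on $\alpha$ and $h$ and a nonsingular $p\times p$ matrix $M$ depending on $\theta,\alpha,h$, such that for each $j=1,\dots,p$ either $\int u_{\theta_j}f_\theta^{1+\alpha}=0$ or the $j$-th column of $M$ does not depend on $\theta$. Then the influence function of the minimum $S^*$-divergence functional $T^*_{(\alpha,\lambda)}$ at $G=F_\theta$ equals that of the minimum $S$-divergence functional at $F_\theta$, namely $$IF(y;F_\theta,T^*_{(\alpha,\lambda)})=\left(\int u_\theta u_\theta^Tf_\theta^{1+\alpha}\right)^{-1}\left[u_\theta(y)f_\theta^\alpha(y)-\int u_\theta f_\theta^{1+\alpha}\right].$$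
   Context: $\{F_\theta:\theta\in\Theta\subseteq\mathbb{R}^p\}$ is a parametric family on $\mathbb{R}$ with Lebesgue densities $f_\theta$, $u_\theta=\nabla_\theta\log f_\theta$ with components $u_{\theta_j}$. Fix $\alpha\ge0$, $\lambda\in\mathbb{R}$, $A=1+\lambda(1-\alpha)$, $B=\alpha-\lambda(1-\alpha)$, and $S_{(\alpha,\lambda)}(g,f)=\frac1A\int f^{1+\alpha}-\frac{1+\alpha}{AB}\int f^Bg^A+\frac1B\int g^{1+\alpha}$ (continuous limits when $A=0$ or $B=0$). $W(x,y,h)\ge0$ is a kernel with fixed bandwidth $h>0$, a probability density in $x$ for each $y$; $f^*_\theta(x)=\int W(x,y,h)f_\theta(y)dy$, $g^*(x)=\int W(x,y,h)dG(y)$, $\tilde u_\theta=\nabla_\theta\log f^*_\theta$, $u^{\alpha*}_\theta(y)=\int\tilde u_\theta(x)\{f^*_\theta(x)\}^\alpha W(x,y,h)dx$. The minimum $S^*$-divergence functional $T^*_{(\alpha,\lambda)}(G)$ minimizes $\theta\mapsto S_{(\alpha,\lambda)}(g^*,f^*_\theta)$ (solving $\int K(g^*/f^*_\theta-1)(f^*_\theta)^{1+\alpha}\tilde u_\theta=0$, $K(\delta)=((\delta+1)^A-1)/A$, or $\log(1+\delta)$ if $A=0$). The influence function is $IF(y;G,T)=\frac{\partial}{\partial\epsilon}T((1-\epsilon)G+\epsilon\wedge_y)|_{\epsilon=0}$, $\wedge_y$ the point mass at $y$. *)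

theory Defs
  imports "HOL-Analysis.Analysis"
begin

definition SA :: "real \<Rightarrow> real \<Rightarrow> real" where
  "SA \<alpha> lam = 1 + lam * (1 - \<alpha>)"

definition SB :: "real \<Rightarrow> real \<Rightarrow> real" where
  "SB \<alpha> lam = \<alpha> - lam * (1 - \<alpha>)"

text \<open>The S-divergence S_(alpha,lambda)(g,f) between two (density) functions on the real line,
  with the continuous limits in the cases A = 0 and B = 0.\<close>
definition Sdiv :: "real \<Rightarrow> real \<Rightarrow> (real \<Rightarrow> real) \<Rightarrow> (real \<Rightarrow> real) \<Rightarrow> real" where
  "Sdiv \<alpha> lam g f =
    (let A = SA \<alpha> lam; B = SB \<alpha> lam in
     if A = 0 then
       (LINT x|lborel. f x powr (1 + \<alpha>) * ln (f x / g x))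
       - (1 / (1 + \<alpha>)) * ((LINT x|lborel. f x powr (1 + \<alpha>)) - (LINT x|lborel. g x powr (1 + \<alpha>)))
     else if B = 0 then
       (LINT x|lborel. g x powr (1 + \<alpha>) * ln (g x / f x))
       - (1 / (1 + \<alpha>)) * ((LINT x|lborel. g x powr (1 + \<alpha>)) - (LINT x|lborel. f x powr (1 + \<alpha>)))
     else
       (1 / A) * (LINT x|lborel. f x powr (1 + \<alpha>))
       - ((1 + \<alpha>) / (A * B)) * (LINT x|lborel. f x powr B * g x powr A)
       + (1 / B) * (LINT x|lborel. g x powr (1 + \<alpha>)))"

definition Kfun :: "real \<Rightarrow> real \<Rightarrow> real" where
  "Kfun A \<delta> = (if A = 0 then ln (1 + \<delta>) else ((\<delta> + 1) powr A - 1) / A)"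

definition pgrad :: "(real^'p \<Rightarrow> real) \<Rightarrow> real^'p \<Rightarrow> real^'p" where
  "pgrad \<phi> t = (\<chi> j. deriv (\<lambda>s. \<phi> (t + s *\<^sub>R axis j 1)) 0)"

definition outer :: "real^'p \<Rightarrow> real^'p \<Rightarrow> real^'p^'p" where
  "outer u v = (\<chi> i j. u $ i * v $ j)"

definition score :: "(real^'p \<Rightarrow> real \<Rightarrow> real) \<Rightarrow> real^'p \<Rightarrow> real \<Rightarrow> real^'p" where
  "score f t y = pgrad (\<lambda>s. ln (f s y)) t"

definition fstar :: "(real \<Rightarrow> real \<Rightarrow> real \<Rightarrow> real) \<Rightarrow> real \<Rightarrow> (real^'p \<Rightarrow> real \<Rightarrow> real)
    \<Rightarrow> real^'p \<Rightarrow> real \<Rightarrow> real" where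
  "fstar W h f t x = (LINT y|lborel. W x y h * f t y)"

definition sscore :: "(real \<Rightarrow> real \<Rightarrow> real \<Rightarrow> real) \<Rightarrow> real \<Rightarrow> (real^'p \<Rightarrow> real \<Rightarrow> real)
    \<Rightarrow> real^'p \<Rightarrow> real \<Rightarrow> real^'p" where
  "sscore W h f t x = pgrad (\<lambda>s. ln (fstar W h f s x)) t"

definition ualphastar :: "(real \<Rightarrow> real \<Rightarrow> real \<Rightarrow> real) \<Rightarrow> real \<Rightarrow> (real^'p \<Rightarrow> real \<Rightarrow> real)
    \<Rightarrow> real \<Rightarrow> real^'p \<Rightarrow> real \<Rightarrow> real^'p" where
  "ualphastar W h f \<alpha> t y =
     (LINT x|lborel. (fstar W h f t x powr \<alpha> * W x y h) *\<^sub>R sscore W h f t x)"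

text \<open>Kernel-smoothed density g* of the contaminated distribution (1-eps) F_theta + eps Delta_y:
  g*(x) = int W(x,z,h) d((1-eps)F_theta + eps Delta_y)(z) = (1-eps) f*_theta(x) + eps W(x,y,h).\<close>
definition gcontam :: "(real \<Rightarrow> real \<Rightarrow> real \<Rightarrow> real) \<Rightarrow> real \<Rightarrow> (real^'p \<Rightarrow> real \<Rightarrow> real)
    \<Rightarrow> real^'p \<Rightarrow> real \<Rightarrow> real \<Rightarrow> real \<Rightarrow> real" where
  "gcontam W h f \<theta> y \<epsilon> x = (1 - \<epsilon>) * fstar W h f \<theta> x + \<epsilon> * W x y h"

definition est_integrand :: "(real \<Rightarrow> real \<Rightarrow> real \<Rightarrow> real) \<Rightarrow> real \<Rightarrow> (real^'p \<Rightarrow> real \<Rightarrow> real)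
    \<Rightarrow> real \<Rightarrow> real \<Rightarrow> (real \<Rightarrow> real) \<Rightarrow> real^'p \<Rightarrow> real \<Rightarrow> real^'p" where
  "est_integrand W h f \<alpha> lam g t x =
     (Kfun (SA \<alpha> lam) (g x / fstar W h f t x - 1) * fstar W h f t x powr (1 + \<alpha>))
       *\<^sub>R sscore W h f t x"

definition est_fun :: "(real \<Rightarrow> real \<Rightarrow> real \<Rightarrow> real) \<Rightarrow> real \<Rightarrow> (real^'p \<Rightarrow> real \<Rightarrow> real)
    \<Rightarrow> real \<Rightarrow> real \<Rightarrow> (real \<Rightarrow> real) \<Rightarrow> real^'p \<Rightarrow> real^'p" where
  "est_fun W h f \<alpha> lam g t = (LINT x|lborel. est_integrand W h f \<alpha> lam g t x)"

end

theory Submission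
  imports Defs
begin


lemma pgrad_has_derivative:
  fixes \<phi> :: "real^'p \<Rightarrow> real"
  assumes "\<phi> differentiable (at t)"
  shows "(\<phi> has_derivative (\<lambda>d. pgrad \<phi> t \<bullet> d)) (at t)"
proof -
  obtain D where D: "(\<phi> has_derivative D) (at t)" using assms by (auto simp: differentiable_def)
  have lin: "linear D" using D has_derivative_linear by blast
  have pj: "pgrad \<phi> t $ j = D (axis j 1)" for j
  proof -
    have l: "((\<lambda>s::real. t + s *\<^sub>R axis j 1) has_derivative (\<lambda>s. s *\<^sub>R axis j 1)) (at 0)"
      by (auto intro!: derivative_eq_intros)
    have "((\<lambda>s::real. \<phi> (t + s *\<^sub>R axis j 1)) has_derivative (\<lambda>s. D (s *\<^sub>R axis j 1))) (at 0)"
      using has_derivative_compose[OF l] D by simp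
    then have "((\<lambda>s::real. \<phi> (t + s *\<^sub>R axis j 1)) has_derivative (\<lambda>s. s * D (axis j 1))) (at 0)"
      using linear_cmul[OF lin] by simp
    moreover have "(\<lambda>s. s * D (axis j 1)) = (*) (D (axis j 1))" by (auto simp: fun_eq_iff)
    ultimately have "((\<lambda>s::real. \<phi> (t + s *\<^sub>R axis j 1)) has_real_derivative D (axis j 1)) (at 0)"
      by (simp add: has_field_derivative_def)
    then show ?thesis unfolding pgrad_def by (simp add: DERIV_imp_deriv)
  qed
  have "D d = pgrad \<phi> t \<bullet> d" for d
  proof -
    have "D d = D (\<Sum>i\<in>UNIV. d $ i *\<^sub>R axis i 1)"
      using basis_expansion[of d] by (simp add: scalar_mult_eq_scaleR)
    also have "\<dots> = (\<Sum>i\<in>UNIV. d $ i * D (axis i 1))"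
      by (simp add: linear_sum[OF lin] linear_cmul[OF lin])
    also have "\<dots> = pgrad \<phi> t \<bullet> d" by (simp add: inner_vec_def pj mult.commute)
    finally show ?thesis .
  qed
  then show ?thesis using D by (metis (no_types, lifting) ext)
qed

lemma pgrad_ln:
  fixes \<phi> :: "real^'p \<Rightarrow> real"
  assumes "\<phi> differentiable (at t)" "\<phi> t > 0"
  shows "pgrad (\<lambda>s. ln (\<phi> s)) t = (1 / \<phi> t) *\<^sub>R pgrad \<phi> t"
proof -
  have D: "(\<phi> has_derivative (\<lambda>d. pgrad \<phi> t \<bullet> d)) (at t)" using pgrad_has_derivative[OF assms(1)] .
  have L: "((\<lambda>s. ln (\<phi> s)) has_derivative (\<lambda>d. (pgrad \<phi> t \<bullet> d) * inverse (\<phi> t))) (at t)"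
    using assms(2) by (auto intro!: derivative_eq_intros D)
  then have "(\<lambda>s. ln (\<phi> s)) differentiable (at t)" by (auto simp: differentiable_def)
  from pgrad_has_derivative[OF this] L have eq: "(\<lambda>d. pgrad (\<lambda>s. ln (\<phi> s)) t \<bullet> d) = (\<lambda>d. (pgrad \<phi> t \<bullet> d) * inverse (\<phi> t))"
    using has_derivative_unique by blast
  show ?thesis
  proof (rule vec_eq_iff[THEN iffD2], rule allI)
    fix j
    from fun_cong[OF eq, of "axis j 1"] show "pgrad (\<lambda>s. ln (\<phi> s)) t $ j = ((1 / \<phi> t) *\<^sub>R pgrad \<phi> t) $ j"
      by (simp add: cart_eq_inner_axis[symmetric] field_simps)
  qed
qed

lemma scaleR_zero_deriv:
  fixes k :: "real \<Rightarrow> real" and c :: "real \<Rightarrow> 'a::real_normed_vector"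
  assumes k0: "k 0 = 0" and kd: "(k has_real_derivative k') (at 0 within S)"
    and c: "(c \<longlongrightarrow> c 0) (at 0 within S)"
  shows "((\<lambda>s. k s *\<^sub>R c s) has_vector_derivative (k' *\<^sub>R c 0)) (at 0 within S)"
proof -
  have e: "(\<lambda>s. k s *\<^sub>R c s) = (\<lambda>s. k s *\<^sub>R c 0 + k s *\<^sub>R (c s - c 0))"
    by (simp add: fun_eq_iff algebra_simps)
  have 1: "((\<lambda>s. k s *\<^sub>R c 0) has_vector_derivative (k' *\<^sub>R c 0)) (at 0 within S)"
    using kd by (auto intro!: derivative_eq_intros simp: has_real_derivative_iff_has_vector_derivative)
  have q: "((\<lambda>y. (k y - k 0) / (y - 0)) \<longlongrightarrow> k') (at 0 within S)"
    using kd has_field_derivative_iff by blast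
  have t: "((\<lambda>y. \<bar>(k y - k 0) / (y - 0)\<bar> * norm (c y - c 0)) \<longlongrightarrow> \<bar>k'\<bar> * 0) (at 0 within S)"
    by (intro tendsto_intros q) (use c in \<open>simp add: LIM_zero tendsto_norm_zero\<close>)
  have 2: "((\<lambda>s. k s *\<^sub>R (c s - c 0)) has_vector_derivative 0) (at 0 within S)"
    unfolding has_vector_derivative_def has_derivative_at_within
  proof (intro conjI)
    show "bounded_linear (\<lambda>x::real. x *\<^sub>R (0::'a))" by simp
    have "((\<lambda>y. \<bar>(k y - k 0) / (y - 0)\<bar> * norm (c y - c 0)) \<longlongrightarrow> 0) (at 0 within S)" using t by simp
    then have "((\<lambda>y. norm ((k y *\<^sub>R (c y - c 0) - k 0 *\<^sub>R (c 0 - c 0) - (y - 0) *\<^sub>R 0) /\<^sub>R norm (y - 0))) \<longlongrightarrow> 0) (at 0 within S)"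
      using k0 by (simp add: abs_mult divide_inverse ac_simps del: scaleR_right_diff_distrib)
    then show "((\<lambda>y. (k y *\<^sub>R (c y - c 0) - k 0 *\<^sub>R (c 0 - c 0) - (y - 0) *\<^sub>R 0) /\<^sub>R norm (y - 0)) \<longlongrightarrow> 0) (at 0 within S)"
      using tendsto_norm_zero_iff by blast
  qed
  show ?thesis unfolding e using has_vector_derivative_add[OF 1 2] by simp
qed

lemma outer_mult: "outer a b *v v = (b \<bullet> v) *\<^sub>R a"
  by (simp add: vec_eq_iff outer_def matrix_vector_mult_def inner_vec_def sum_distrib_left mult_ac)

lemma bl_mv: "bounded_linear (\<lambda>A::real^'p^'q. A *v v)"
  by (rule linear_conv_bounded_linear[THEN iffD1], rule linearI)
     (simp_all add: vec_eq_iff matrix_vector_mult_def sum.distrib sum_distrib_left algebra_simps)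

lemma bl_mm: "bounded_linear (\<lambda>A::real^'p^'q. M ** A)"
  by (rule linear_conv_bounded_linear[THEN iffD1], rule linearI)
     (simp_all add: vec_eq_iff matrix_matrix_mult_def sum.distrib sum_distrib_left algebra_simps)

lemma bl_outer1: "bounded_linear (\<lambda>a. outer a b)"
  by (rule linear_conv_bounded_linear[THEN iffD1], rule linearI)
     (simp_all add: vec_eq_iff outer_def algebra_simps)

lemma bl_outer2: "bounded_linear (\<lambda>b. outer a b)"
  by (rule linear_conv_bounded_linear[THEN iffD1], rule linearI)
     (simp_all add: vec_eq_iff outer_def algebra_simps)

lemma outer_Mv: "outer (M *v a) b = M ** outer a b"
  by (simp add: vec_eq_iff outer_def matrix_vector_mult_def matrix_matrix_mult_def sum_distrib_left mult_ac)

lemma matrix_inv_left': "invertible A \<Longrightarrow> matrix_inv A ** A = mat 1"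
  unfolding invertible_def matrix_inv_def by (rule someI2_ex) auto


lemma outer_add1: "outer (a + b) c = outer a c + outer b c"
  by (simp add: vec_eq_iff outer_def algebra_simps)
lemma outer_scale1: "outer (r *\<^sub>R a) b = r *\<^sub>R outer a b"
  by (simp add: vec_eq_iff outer_def algebra_simps)
lemma outer_scale2: "outer a (r *\<^sub>R b) = r *\<^sub>R outer a b"
  by (simp add: vec_eq_iff outer_def algebra_simps)
lemma mm_scale: "(M::real^'n^'m) ** (r *\<^sub>R A) = r *\<^sub>R (M ** (A::real^'p^'n))"
  by (simp add: vec_eq_iff matrix_matrix_mult_def sum_distrib_left algebra_simps)
lemma mv_scale: "(M::real^'n^'m) *v (r *\<^sub>R a) = r *\<^sub>R (M *v a)"
  by (simp add: vec_eq_iff matrix_vector_mult_def sum_distrib_left algebra_simps)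
lemma smv: "(r *\<^sub>R (M::real^'n^'m)) *v a = r *\<^sub>R (M *v a)"
  by (simp add: vec_eq_iff matrix_vector_mult_def sum_distrib_left algebra_simps)
lemma at0_notbot: "(e::real) > 0 \<Longrightarrow> at 0 within {0..<e} \<noteq> bot"
proof -
  assume e: "e > 0"
  have "{0<..<e} \<subseteq> {0..<e}" by auto
  then have "0 islimpt {0..<e}" using islimpt_subset[OF islimpt_greaterThanLessThan1[OF e]] by blast
  then show ?thesis by (simp add: trivial_limit_within)
qed

theorem corollary3:
  fixes f :: "real^'p \<Rightarrow> real \<Rightarrow> real"
    and \<Theta> :: "(real^'p) set" and \<theta> :: "real^'p"
    and W :: "real \<Rightarrow> real \<Rightarrow> real \<Rightarrow> real" and h \<alpha> lam :: real
    and M :: "real^'p \<Rightarrow> real^'p^'p" and L :: "real^'p"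
    and T :: "(real \<Rightarrow> real) \<Rightarrow> real^'p"
    and y \<epsilon>0 :: real and IF :: "real^'p"
    and D\<phi> :: "real \<Rightarrow> (real \<times> (real^'p)) \<Rightarrow> real^'p"
  assumes \<Theta>_open: "open \<Theta>" and \<theta>_in: "\<theta> \<in> \<Theta>"
    and \<alpha>_nonneg: "\<alpha> \<ge> 0" and h_pos: "h > 0"
    \<comment> \<open>parametric family of (everywhere positive) Lebesgue densities\<close>
    and f_pos: "\<forall>t\<in>\<Theta>. \<forall>z. f t z > 0"
    and f_meas: "\<forall>t\<in>\<Theta>. f t \<in> borel_measurable lborel"
    and f_dens: "\<forall>t\<in>\<Theta>. integrable lborel (f t) \<and> (LINT z|lborel. f t z) = 1"
    \<comment> \<open>kernel: a probability density in x for each y\<close>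
    and W_nonneg: "\<forall>x z. W x z h \<ge> 0"
    and W_meas: "(\<lambda>(x, z). W x z h) \<in> borel_measurable (lborel \<Otimes>\<^sub>M lborel)"
    and W_dens: "\<forall>z. integrable lborel (\<lambda>x. W x z h) \<and> (LINT x|lborel. W x z h) = 1"
    \<comment> \<open>regularity conditions (differentiability, interchange of derivative and integral, Fubini)\<close>
    and fstar_pos: "\<forall>t\<in>\<Theta>. \<forall>x. fstar W h f t x > 0"
    and f_diff: "\<forall>z. (\<lambda>s. f s z) differentiable (at \<theta>)"
    and fstar_C1: "\<forall>x. (\<forall>t\<in>\<Theta>. (\<lambda>s. fstar W h f s x) differentiable (at t))
                        \<and> continuous_on \<Theta> (\<lambda>t. pgrad (\<lambda>s. fstar W h f s x) t)"
    and fstar_interchange: "\<forall>x. integrable lborel (\<lambda>z. W x z h *\<^sub>R pgrad (\<lambda>s. f s z) \<theta>)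
          \<and> pgrad (\<lambda>s. fstar W h f s x) \<theta> = (LINT z|lborel. W x z h *\<^sub>R pgrad (\<lambda>s. f s z) \<theta>)"
    and f_interchange: "integrable lborel (\<lambda>z. pgrad (\<lambda>s. f s z) \<theta>)"
          "((\<lambda>t. LINT z|lborel. f t z) has_derivative
              (\<lambda>d. LINT z|lborel. pgrad (\<lambda>s. f s z) \<theta> \<bullet> d)) (at \<theta>)"
    and ualpha_integrable: "\<forall>z. integrable lborel
          (\<lambda>x. (fstar W h f \<theta> x powr \<alpha> * W x z h) *\<^sub>R sscore W h f \<theta> x)"
    and fubini1: "integrable (lborel \<Otimes>\<^sub>M lborel) (\<lambda>(x, z).
          (fstar W h f \<theta> x powr \<alpha> * W x z h * f \<theta> z) *\<^sub>R sscore W h f \<theta> x)"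
    and fubini2: "integrable (lborel \<Otimes>\<^sub>M lborel) (\<lambda>(x, z).
          (fstar W h f \<theta> x powr \<alpha> * W x z h) *\<^sub>R outer (sscore W h f \<theta> x) (pgrad (\<lambda>s. f s z) \<theta>))"
    and score_integrable:
          "integrable lborel (\<lambda>z. f \<theta> z powr (1 + \<alpha>) *\<^sub>R score f \<theta> z)"
          "integrable lborel (\<lambda>z. f \<theta> z powr (1 + \<alpha>) *\<^sub>R outer (score f \<theta> z) (score f \<theta> z))"
    and est_deriv_pointwise: "\<forall>x. ((\<lambda>(e, t). est_integrand W h f \<alpha> lam (gcontam W h f \<theta> y e) t x)
          has_derivative D\<phi> x) (at (0, \<theta>) within {0..<\<epsilon>0} \<times> \<Theta>)"
    and est_deriv_interchange: "((\<lambda>(e, t). est_fun W h f \<alpha> lam (gcontam W h f \<theta> y e) t)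
          has_derivative (\<lambda>v. LINT x|lborel. D\<phi> x v)) (at (0, \<theta>) within {0..<\<epsilon>0} \<times> \<Theta>)"
    \<comment> \<open>T is the minimum S*-divergence functional along the contamination path
        (it minimizes S(g*, f*_t) and solves the estimating equation), Fisher consistent at F_theta\<close>
    and \<epsilon>0: "0 < \<epsilon>0" "\<epsilon>0 \<le> 1"
    and T_min: "\<forall>\<epsilon>\<in>{0..<\<epsilon>0}. T (gcontam W h f \<theta> y \<epsilon>) \<in> \<Theta> \<and>
          (\<forall>t\<in>\<Theta>. Sdiv \<alpha> lam (gcontam W h f \<theta> y \<epsilon>) (fstar W h f (T (gcontam W h f \<theta> y \<epsilon>)))
                   \<le> Sdiv \<alpha> lam (gcontam W h f \<theta> y \<epsilon>) (fstar W h f t))"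
    and T_est: "\<forall>\<epsilon>\<in>{0..<\<epsilon>0}.
          est_fun W h f \<alpha> lam (gcontam W h f \<theta> y \<epsilon>) (T (gcontam W h f \<theta> y \<epsilon>)) = 0"
    and T_fisher: "T (fstar W h f \<theta>) = \<theta>"
    \<comment> \<open>the influence function IF(y; F_theta, T*) exists (derivative along the contamination path)\<close>
    and IF_def: "((\<lambda>\<epsilon>. T (gcontam W h f \<theta> y \<epsilon>)) has_vector_derivative IF) (at 0 within {0..<\<epsilon>0})"
    \<comment> \<open>the kernel condition of the corollary\<close>
    and M_nonsing: "invertible (M \<theta>)"
    and kernel_cond: "\<forall>z. ualphastar W h f \<alpha> \<theta> z = (f \<theta> z powr \<alpha>) *\<^sub>R (M \<theta> *v score f \<theta> z) + L"
    and column_cond: "\<forall>j. (LINT z|lborel. f \<theta> z powr (1 + \<alpha>) * score f \<theta> z $ j) = 0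
                          \<or> (\<forall>s\<in>\<Theta>. column j (M s) = column j (M \<theta>))"
    and J_nonsing: "invertible (LINT z|lborel. f \<theta> z powr (1 + \<alpha>) *\<^sub>R outer (score f \<theta> z) (score f \<theta> z))"
  shows "IF = matrix_inv (LINT z|lborel. f \<theta> z powr (1 + \<alpha>) *\<^sub>R outer (score f \<theta> z) (score f \<theta> z))
              *v (f \<theta> y powr \<alpha> *\<^sub>R score f \<theta> y - (LINT z|lborel. f \<theta> z powr (1 + \<alpha>) *\<^sub>R score f \<theta> z))"
proof -
  define F where "F x = fstar W h f \<theta> x" for x
  define P where "P x = pgrad (\<lambda>s. fstar W h f s x) \<theta>" for x
  define U where "U x = sscore W h f \<theta> x" for x
  define p where "p z = f \<theta> z" for z
  define G where "G z = pgrad (\<lambda>s. f s z) \<theta>" for z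
  define u where "u z = score f \<theta> z" for z
  define J where "J = (LINT z|lborel. f \<theta> z powr (1 + \<alpha>) *\<^sub>R outer (score f \<theta> z) (score f \<theta> z))"
  define \<xi> where "\<xi> = (LINT z|lborel. f \<theta> z powr (1 + \<alpha>) *\<^sub>R score f \<theta> z)"
  define a where "a x = (F x powr \<alpha> * W x y h) *\<^sub>R U x" for x
  define b where "b x = F x powr (1 + \<alpha>) *\<^sub>R U x" for x
  define c where "c x = F x powr (1 + \<alpha>) *\<^sub>R outer (U x) (U x)" for x
  have Fpos: "\<And>x. F x > 0" using fstar_pos \<theta>_in F_def by auto
  have ppos: "\<And>z. p z > 0" using f_pos \<theta>_in p_def by auto
  have fsdiff: "\<And>x. (\<lambda>s. fstar W h f s x) differentiable (at \<theta>)" using fstar_C1 \<theta>_in by blast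
  have S1: "G z = p z *\<^sub>R u z" for z
  proof -
    have "u z = (1 / p z) *\<^sub>R G z"
      using pgrad_ln[OF f_diff[rule_format] f_pos[rule_format, OF \<theta>_in]]
      by (simp add: G_def p_def u_def score_def)
    then show ?thesis using ppos[of z] by simp
  qed
  have S2: "P x = F x *\<^sub>R U x" for x
  proof -
    have "U x = (1 / F x) *\<^sub>R P x"
      using pgrad_ln[OF fsdiff, of x] fstar_pos \<theta>_in
      by (simp add: P_def F_def U_def sscore_def)
    then show ?thesis using Fpos[of x] by simp
  qed
  have S3: "(LINT z|lborel. G z) = 0"
  proof -
    have "((\<lambda>t. LINT z|lborel. f t z) has_derivative (\<lambda>d. 0)) (at \<theta>)"
      by (rule has_derivative_transform_within_open[of "\<lambda>t. 1" _ _ _ \<Theta>]) (use f_dens \<theta>_in \<Theta>_open in auto)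
    with f_interchange(2) have "(\<lambda>d. LINT z|lborel. pgrad (\<lambda>s. f s z) \<theta> \<bullet> d) = (\<lambda>d. 0)"
      using has_derivative_unique by blast
    from fun_cong[OF this, of "LINT z|lborel. G z"]
    have "(LINT z|lborel. G z) \<bullet> (LINT z|lborel. G z) = 0"
      using f_interchange(1) by (simp add: G_def)
    then show ?thesis by simp
  qed
  have S4: "integrable lborel (\<lambda>z. W x z h * p z) \<and> F x = (LINT z|lborel. W x z h * p z)" for x
  proof -
    have "F x = (LINT z|lborel. W x z h * p z)" by (simp add: F_def fstar_def p_def)
    moreover have "integrable lborel (\<lambda>z. W x z h * p z)"
      using Fpos[of x] calculation not_integrable_integral_eq by fastforce
    ultimately show ?thesis by simp
  qed
  have S5: "integrable lborel b \<and> (LINT x|lborel. b x) = M \<theta> *v \<xi> + L"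
  proof -
    have pw: "(LINT z|lborel. (fstar W h f \<theta> x powr \<alpha> * W x z h * f \<theta> z) *\<^sub>R sscore W h f \<theta> x) = b x" for x
    proof -
      have ii: "integrable lborel (\<lambda>z. F x powr \<alpha> * (W x z h * p z))"
        using S4[of x] by (intro integrable_mult_right) simp
      have "(LINT z|lborel. (fstar W h f \<theta> x powr \<alpha> * W x z h * f \<theta> z) *\<^sub>R sscore W h f \<theta> x)
          = (LINT z|lborel. (F x powr \<alpha> * (W x z h * p z)) *\<^sub>R U x)"
        by (simp add: F_def U_def p_def mult.assoc)
      also have "\<dots> = (LINT z|lborel. F x powr \<alpha> * (W x z h * p z)) *\<^sub>R U x"
        using ii by (rule integral_scaleR_left)
      also have "\<dots> = (F x powr \<alpha> * F x) *\<^sub>R U x" using S4[of x] by simp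
      also have "\<dots> = b x" using Fpos[of x] by (simp add: b_def powr_add)
      finally show ?thesis .
    qed
    have ib: "integrable lborel b" using lborel_pair.integrable_fst[OF fubini1] by (simp add: pw)
    have inner: "(LINT x|lborel. (fstar W h f \<theta> x powr \<alpha> * W x z h * f \<theta> z) *\<^sub>R sscore W h f \<theta> x)
        = p z powr (1 + \<alpha>) *\<^sub>R (M \<theta> *v u z) + p z *\<^sub>R L" for z
    proof -
      have "(LINT x|lborel. (fstar W h f \<theta> x powr \<alpha> * W x z h * f \<theta> z) *\<^sub>R sscore W h f \<theta> x)
          = (LINT x|lborel. p z *\<^sub>R ((fstar W h f \<theta> x powr \<alpha> * W x z h) *\<^sub>R sscore W h f \<theta> x))"
        by (simp add: p_def mult_ac)
      also have "\<dots> = p z *\<^sub>R ualphastar W h f \<alpha> \<theta> z" by (simp only: integral_scaleR_right ualphastar_def)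
      also have "\<dots> = p z *\<^sub>R (p z powr \<alpha> *\<^sub>R (M \<theta> *v u z) + L)"
        using kernel_cond by (simp add: p_def u_def)
      also have "\<dots> = p z powr (1 + \<alpha>) *\<^sub>R (M \<theta> *v u z) + p z *\<^sub>R L"
        using ppos[of z] by (simp add: powr_add algebra_simps)
      finally show ?thesis .
    qed
    have "(LINT x|lborel. b x) = (LINT z|lborel. p z powr (1 + \<alpha>) *\<^sub>R (M \<theta> *v u z) + p z *\<^sub>R L)"
      using lborel_pair.integral_fst[OF fubini1] lborel_pair.integral_snd[OF fubini1] by (simp add: pw inner)
    also have "\<dots> = (LINT z|lborel. M \<theta> *v (p z powr (1 + \<alpha>) *\<^sub>R u z)) + (LINT z|lborel. p z *\<^sub>R L)"
    proof -
      have i1: "integrable lborel (\<lambda>z. M \<theta> *v (p z powr (1 + \<alpha>) *\<^sub>R u z))"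
        using integrable_bounded_linear[OF matrix_vector_mul_bounded_linear score_integrable(1)]
        by (simp add: p_def u_def)
      have i2: "integrable lborel (\<lambda>z. p z *\<^sub>R L)" using f_dens \<theta>_in by (simp add: p_def)
      show ?thesis using Bochner_Integration.integral_add[OF i1 i2] by (simp add: mv_scale)
    qed
    also have "\<dots> = M \<theta> *v \<xi> + L"
      using integral_bounded_linear[OF matrix_vector_mul_bounded_linear score_integrable(1)] f_dens \<theta>_in
      by (simp add: p_def u_def \<xi>_def)
    finally show ?thesis using ib by simp
  qed
  have S6: "integrable lborel c \<and> (LINT x|lborel. c x) = M \<theta> ** J"
  proof -
    have pw: "(LINT z|lborel. (fstar W h f \<theta> x powr \<alpha> * W x z h) *\<^sub>R outer (sscore W h f \<theta> x) (pgrad (\<lambda>s. f s z) \<theta>)) = c x" for x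
    proof -
      have ii: "integrable lborel (\<lambda>z. (F x powr \<alpha> * W x z h) *\<^sub>R G z)"
      proof -
        have "integrable lborel (\<lambda>z. F x powr \<alpha> *\<^sub>R (W x z h *\<^sub>R G z))"
          using fstar_interchange[rule_format, of x] by (intro integrable_scaleR_right) (simp add: G_def)
        then show ?thesis by simp
      qed
      have "(LINT z|lborel. (fstar W h f \<theta> x powr \<alpha> * W x z h) *\<^sub>R outer (sscore W h f \<theta> x) (pgrad (\<lambda>s. f s z) \<theta>))
          = (LINT z|lborel. outer (U x) ((F x powr \<alpha> * W x z h) *\<^sub>R G z))"
        by (simp add: F_def U_def G_def outer_scale2)
      also have "\<dots> = outer (U x) (LINT z|lborel. (F x powr \<alpha> * W x z h) *\<^sub>R G z)"
        using integral_bounded_linear[OF bl_outer2 ii] .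
      also have "(LINT z|lborel. (F x powr \<alpha> * W x z h) *\<^sub>R G z) = F x powr \<alpha> *\<^sub>R P x"
      proof -
        have "(LINT z|lborel. (F x powr \<alpha> * W x z h) *\<^sub>R G z) = (LINT z|lborel. F x powr \<alpha> *\<^sub>R (W x z h *\<^sub>R G z))"
          by simp
        also have "\<dots> = F x powr \<alpha> *\<^sub>R (LINT z|lborel. W x z h *\<^sub>R G z)" by (simp only: integral_scaleR_right)
        finally show ?thesis using fstar_interchange[rule_format, of x] by (simp add: P_def G_def)
      qed
      also have "outer (U x) (F x powr \<alpha> *\<^sub>R P x) = c x"
        using Fpos[of x] by (simp add: S2 c_def outer_scale2 powr_add)
      finally show ?thesis .
    qed
    have ic: "integrable lborel c" using lborel_pair.integrable_fst[OF fubini2] by (simp add: pw)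
    have inner: "(LINT x|lborel. (fstar W h f \<theta> x powr \<alpha> * W x z h) *\<^sub>R outer (sscore W h f \<theta> x) (pgrad (\<lambda>s. f s z) \<theta>))
        = M \<theta> ** (p z powr (1 + \<alpha>) *\<^sub>R outer (u z) (u z)) + outer L (G z)" for z
    proof -
      have "(LINT x|lborel. (fstar W h f \<theta> x powr \<alpha> * W x z h) *\<^sub>R outer (sscore W h f \<theta> x) (pgrad (\<lambda>s. f s z) \<theta>))
          = (LINT x|lborel. outer ((fstar W h f \<theta> x powr \<alpha> * W x z h) *\<^sub>R sscore W h f \<theta> x) (G z))"
        by (simp add: G_def outer_scale1)
      also have "\<dots> = outer (ualphastar W h f \<alpha> \<theta> z) (G z)"
        using integral_bounded_linear[OF bl_outer1 ualpha_integrable[rule_format, of z]]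
        by (simp add: ualphastar_def)
      also have "\<dots> = outer (p z powr \<alpha> *\<^sub>R (M \<theta> *v u z) + L) (G z)"
        using kernel_cond by (simp add: p_def u_def)
      also have "\<dots> = M \<theta> ** (p z powr (1 + \<alpha>) *\<^sub>R outer (u z) (u z)) + outer L (G z)"
        using ppos[of z] by (simp add: S1 outer_add1 outer_scale1 outer_scale2 outer_Mv mm_scale powr_add mult.commute scaleR_add_right)
      finally show ?thesis .
    qed
    have "(LINT x|lborel. c x) = (LINT z|lborel. M \<theta> ** (p z powr (1 + \<alpha>) *\<^sub>R outer (u z) (u z)) + outer L (G z))"
      using lborel_pair.integral_fst[OF fubini2] lborel_pair.integral_snd[OF fubini2] by (simp add: pw inner)
    also have "\<dots> = (LINT z|lborel. M \<theta> ** (p z powr (1 + \<alpha>) *\<^sub>R outer (u z) (u z))) + (LINT z|lborel. outer L (G z))"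
    proof -
      have i1: "integrable lborel (\<lambda>z. M \<theta> ** (p z powr (1 + \<alpha>) *\<^sub>R outer (u z) (u z)))"
        using integrable_bounded_linear[OF bl_mm score_integrable(2)]
        by (simp add: p_def u_def)
      have i2: "integrable lborel (\<lambda>z. outer L (G z))"
        using integrable_bounded_linear[OF bl_outer2 f_interchange(1)] by (simp add: G_def)
      show ?thesis using Bochner_Integration.integral_add[OF i1 i2] by simp
    qed
    also have "\<dots> = M \<theta> ** J"
      using integral_bounded_linear[OF bl_mm score_integrable(2)]
        integral_bounded_linear[OF bl_outer2 f_interchange(1), of L] S3
      by (simp add: p_def u_def J_def G_def vec_eq_iff outer_def)
    finally show ?thesis using ic by simp
  qed
  have S7: "integrable lborel a \<and> (LINT x|lborel. a x) = p y powr \<alpha> *\<^sub>R (M \<theta> *v u y) + L"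
    using ualpha_integrable kernel_cond
    unfolding a_def[abs_def] F_def[abs_def] U_def[abs_def] by (simp add: ualphastar_def p_def u_def)
  obtain r where r: "r > 0" "ball \<theta> r \<subseteq> \<Theta>" using \<Theta>_open \<theta>_in open_contains_ball by blast
  define \<delta> where "\<delta> = min \<epsilon>0 (r / (norm IF + 1))"
  have \<delta>pos: "\<delta> > 0" using r \<epsilon>0 by (simp add: \<delta>_def add_nonneg_pos)
  have line_in: "\<theta> + s *\<^sub>R IF \<in> \<Theta>" if s: "s \<in> {0..<\<delta>}" for s
  proof -
    have "norm (s *\<^sub>R IF) = s * norm IF" using s by simp
    also have "\<dots> \<le> s * (norm IF + 1)" using s by (simp add: mult_left_mono)
    also have "\<dots> < r" using s by (simp add: \<delta>_def less_divide_eq add_nonneg_pos)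
    finally show ?thesis using r(2) by (auto simp: dist_norm subset_iff)
  qed
  have S8: "D\<phi> x (1, IF) = a x - b x - c x *v IF" for x
  proof -
    define \<sigma> where "\<sigma> s = (s, \<theta> + s *\<^sub>R IF)" for s :: real
    define E where "E = (\<lambda>(e, t). est_integrand W h f \<alpha> lam (gcontam W h f \<theta> y e) t x)"
    have \<sigma>d: "(\<sigma> has_derivative (\<lambda>s. (s, s *\<^sub>R IF))) (at 0 within {0..<\<delta>})"
      unfolding \<sigma>_def by (auto intro!: derivative_eq_intros)
    have \<sigma>0: "\<sigma> 0 = (0, \<theta>)" by (simp add: \<sigma>_def)
    have sub: "\<sigma> ` {0..<\<delta>} \<subseteq> {0..<\<epsilon>0} \<times> \<Theta>" using line_in by (auto simp: \<sigma>_def \<delta>_def)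
    have Ed: "(E has_derivative D\<phi> x) (at (\<sigma> 0) within \<sigma> ` {0..<\<delta>})"
      using has_derivative_subset[OF est_deriv_pointwise[rule_format, of x] sub] \<sigma>0 unfolding E_def by simp
    have lin: "linear (D\<phi> x)" using has_derivative_linear[OF est_deriv_pointwise[rule_format, of x]] .
    have "(\<lambda>s. D\<phi> x (s, s *\<^sub>R IF)) = (\<lambda>s. s *\<^sub>R D\<phi> x (1, IF))"
    proof
      fix s :: real
      have "(s, s *\<^sub>R IF) = s *\<^sub>R (1, IF)" by simp
      then show "D\<phi> x (s, s *\<^sub>R IF) = s *\<^sub>R D\<phi> x (1, IF)" using linear_cmul[OF lin, of s "(1, IF)"] by simp
    qed
    then have v1: "((\<lambda>s. E (\<sigma> s)) has_vector_derivative D\<phi> x (1, IF)) (at 0 within {0..<\<delta>})"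
      using has_derivative_in_compose[OF \<sigma>d Ed] by (simp add: has_vector_derivative_def)
    define Dn where "Dn s = fstar W h f (\<theta> + s *\<^sub>R IF) x" for s
    define N where "N s = (1 - s) * F x + s * W x y h" for s
    define dl where "dl s = N s / Dn s - 1" for s
    define k where "k s = Kfun (SA \<alpha> lam) (dl s)" for s
    define cc where "cc s = Dn s powr (1 + \<alpha>) *\<^sub>R sscore W h f (\<theta> + s *\<^sub>R IF) x" for s
    have Dn0: "Dn 0 = F x" by (simp add: Dn_def F_def)
    have N0: "N 0 = F x" by (simp add: N_def)
    have dl0: "dl 0 = 0" using Fpos[of x] by (simp add: dl_def Dn0 N0)
    have k0: "k 0 = 0" by (simp add: k_def dl0 Kfun_def)
    have Dnd: "(Dn has_real_derivative (P x \<bullet> IF)) (at 0)"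
    proof -
      have l: "((\<lambda>s::real. \<theta> + s *\<^sub>R IF) has_derivative (\<lambda>s. s *\<^sub>R IF)) (at 0)"
        by (auto intro!: derivative_eq_intros)
      have "(Dn has_derivative (\<lambda>s. P x \<bullet> (s *\<^sub>R IF))) (at 0)"
      proof -
        have pd: "((\<lambda>s. fstar W h f s x) has_derivative (\<lambda>d. P x \<bullet> d)) (at ((\<lambda>s::real. \<theta> + s *\<^sub>R IF) 0))"
          using pgrad_has_derivative[OF fsdiff[of x]] by (simp add: P_def)
        show ?thesis using has_derivative_compose[OF l pd] unfolding Dn_def .
      qed
      moreover have "(\<lambda>s. P x \<bullet> (s *\<^sub>R IF)) = (*) (P x \<bullet> IF)" by (auto simp: fun_eq_iff)
      ultimately show ?thesis by (simp add: has_field_derivative_def)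
    qed
    have Nd: "(N has_real_derivative (W x y h - F x)) (at 0)"
      unfolding N_def by (auto intro!: derivative_eq_intros)
    define dl' where "dl' = ((W x y h - F x) * F x - F x * (P x \<bullet> IF)) / (F x * F x)"
    have dld: "(dl has_real_derivative dl') (at 0)"
    proof -
      have "((\<lambda>s. N s / Dn s) has_real_derivative dl') (at 0)"
        using DERIV_divide[OF Nd Dnd] Fpos[of x] by (simp add: Dn0 N0 dl'_def)
      from DERIV_diff[OF this DERIV_const[of 1]] show ?thesis unfolding dl_def by simp
    qed
    have kd: "(k has_real_derivative dl') (at 0)"
    proof (cases "SA \<alpha> lam = 0")
      case True
      have g: "((\<lambda>s. 1 + dl s) has_real_derivative dl') (at 0)" using DERIV_add[OF DERIV_const dld] by simp
      have "((\<lambda>s. ln (1 + dl s)) has_real_derivative inverse (1 + dl 0) * dl') (at 0)"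
        using DERIV_chain2[OF DERIV_ln[of "1 + dl 0"] g] dl0 by simp
      moreover have "k = (\<lambda>s. ln (1 + dl s))" by (simp add: fun_eq_iff k_def Kfun_def True)
      ultimately show ?thesis using dl0 by simp
    next
      case False
      define A where "A = SA \<alpha> lam"
      have g: "((\<lambda>s. dl s + 1) has_real_derivative dl') (at 0)" using DERIV_add[OF dld DERIV_const] by simp
      have "((\<lambda>s. (dl s + 1) powr A) has_real_derivative (A * (dl 0 + 1) powr (A - 1)) * dl') (at 0)"
        using DERIV_chain2[OF has_real_derivative_powr[of "dl 0 + 1" A] g] dl0 by simp
      then have "((\<lambda>s. (dl s + 1) powr A) has_real_derivative A * dl') (at 0)" using dl0 by simp
      from DERIV_cdivide[OF DERIV_diff[OF this DERIV_const[of 1]], of A]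
      have "((\<lambda>s. ((dl s + 1) powr A - 1) / A) has_real_derivative dl') (at 0)"
        using False by (simp add: A_def)
      moreover have "k = (\<lambda>s. ((dl s + 1) powr A - 1) / A)" using False by (simp add: fun_eq_iff k_def Kfun_def A_def)
      ultimately show ?thesis by simp
    qed
    have ccl: "(cc \<longlongrightarrow> cc 0) (at 0 within {0..<\<delta>})"
    proof -
      define Pg where "Pg t = pgrad (\<lambda>s. fstar W h f s x) t" for t
      have eqs: "cc s = Dn s powr (1 + \<alpha>) *\<^sub>R ((1 / Dn s) *\<^sub>R Pg (\<theta> + s *\<^sub>R IF))" if "s \<in> {0..<\<delta>}" for s
      proof -
        have tin: "\<theta> + s *\<^sub>R IF \<in> \<Theta>" using line_in that .
        have "sscore W h f (\<theta> + s *\<^sub>R IF) x = (1 / Dn s) *\<^sub>R Pg (\<theta> + s *\<^sub>R IF)"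
          using pgrad_ln[of "\<lambda>s. fstar W h f s x" "\<theta> + s *\<^sub>R IF"] fstar_C1 fstar_pos tin
          unfolding sscore_def Dn_def Pg_def by auto
        then show ?thesis by (simp add: cc_def)
      qed
      have Dnc: "(Dn \<longlongrightarrow> Dn 0) (at 0)" using DERIV_isCont[OF Dnd] isCont_def by blast
      have Pgc: "isCont Pg \<theta>"
        using fstar_C1 \<Theta>_open \<theta>_in continuous_on_eq_continuous_at unfolding Pg_def by blast
      have lin0: "((\<lambda>s::real. \<theta> + s *\<^sub>R IF) \<longlongrightarrow> \<theta>) (at 0)"
        by (auto intro!: tendsto_eq_intros)
      have "((\<lambda>s. Pg (\<theta> + s *\<^sub>R IF)) \<longlongrightarrow> Pg \<theta>) (at 0)" using isCont_tendsto_compose[OF Pgc lin0] .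
      then have "((\<lambda>s. Dn s powr (1 + \<alpha>) *\<^sub>R ((1 / Dn s) *\<^sub>R Pg (\<theta> + s *\<^sub>R IF))) \<longlongrightarrow>
            Dn 0 powr (1 + \<alpha>) *\<^sub>R ((1 / Dn 0) *\<^sub>R Pg \<theta>)) (at 0)"
        using Dnc Fpos[of x] Dn0 by (auto intro!: tendsto_intros)
      then have T1: "((\<lambda>s. Dn s powr (1 + \<alpha>) *\<^sub>R ((1 / Dn s) *\<^sub>R Pg (\<theta> + s *\<^sub>R IF))) \<longlongrightarrow>
            Dn 0 powr (1 + \<alpha>) *\<^sub>R ((1 / Dn 0) *\<^sub>R Pg \<theta>)) (at 0 within {0..<\<delta>})"
        using tendsto_within_subset by blast
      have c0: "cc 0 = Dn 0 powr (1 + \<alpha>) *\<^sub>R ((1 / Dn 0) *\<^sub>R Pg \<theta>)"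
        using eqs[of 0] \<delta>pos by simp
      have ev: "eventually (\<lambda>s. Dn s powr (1 + \<alpha>) *\<^sub>R ((1 / Dn s) *\<^sub>R Pg (\<theta> + s *\<^sub>R IF)) = cc s) (at 0 within {0..<\<delta>})"
        unfolding eventually_at_filter using eqs by (auto intro!: always_eventually)
      show ?thesis using Lim_transform_eventually[OF T1 ev] c0 by simp
    qed
    have Eeq: "E (\<sigma> s) = k s *\<^sub>R cc s" for s
      by (simp add: E_def \<sigma>_def est_integrand_def gcontam_def k_def cc_def dl_def N_def Dn_def F_def)
    have v2: "((\<lambda>s. E (\<sigma> s)) has_vector_derivative dl' *\<^sub>R cc 0) (at 0 within {0..<\<delta>})"
      using scaleR_zero_deriv[OF k0 has_field_derivative_at_within[OF kd] ccl] by (simp add: Eeq)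
    have "D\<phi> x (1, IF) = dl' *\<^sub>R cc 0" using vector_derivative_unique_within[OF at0_notbot[OF \<delta>pos] v1 v2] .
    also have "\<dots> = a x - b x - c x *v IF"
    proof -
      have cc0: "cc 0 = F x powr (1 + \<alpha>) *\<^sub>R U x" by (simp add: cc_def Dn0 U_def)
      have pa: "F x powr (1 + \<alpha>) = F x * F x powr \<alpha>" using Fpos[of x] by (simp add: powr_add)
      have "dl' * F x powr (1 + \<alpha>) = F x powr \<alpha> * W x y h - F x powr (1 + \<alpha>) - F x powr (1 + \<alpha>) * (U x \<bullet> IF)"
        using Fpos[of x] unfolding pa dl'_def S2 by (simp add: field_simps)
      then show ?thesis
        by (simp add: cc0 a_def b_def c_def smv outer_mult algebra_simps flip: scaleR_left_diff_distrib)
    qed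
    finally show ?thesis .
  qed
  have S9: "(LINT x|lborel. D\<phi> x (1, IF)) = 0"
  proof -
    define \<gamma> where "\<gamma> e = (e, T (gcontam W h f \<theta> y e))" for e
    have g0: "gcontam W h f \<theta> y 0 = fstar W h f \<theta>" by (rule ext) (simp add: gcontam_def)
    have \<gamma>0: "\<gamma> 0 = (0, \<theta>)" using T_fisher g0 by (simp add: \<gamma>_def)
    have \<gamma>d: "(\<gamma> has_derivative (\<lambda>e. (e, e *\<^sub>R IF))) (at 0 within {0..<\<epsilon>0})"
      using IF_def unfolding has_vector_derivative_def \<gamma>_def
      by (auto intro!: derivative_eq_intros)
    have sub: "\<gamma> ` {0..<\<epsilon>0} \<subseteq> {0..<\<epsilon>0} \<times> \<Theta>" using T_min by (auto simp: \<gamma>_def)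
    define \<Phi> where "\<Phi> = (\<lambda>(e, t). est_fun W h f \<alpha> lam (gcontam W h f \<theta> y e) t)"
    have \<Phi>d: "(\<Phi> has_derivative (\<lambda>v. LINT x|lborel. D\<phi> x v)) (at (\<gamma> 0) within \<gamma> ` {0..<\<epsilon>0})"
      using has_derivative_subset[OF est_deriv_interchange sub] \<gamma>0 unfolding \<Phi>_def by simp
    have lin: "linear (\<lambda>v. LINT x|lborel. D\<phi> x v)"
      using has_derivative_linear[OF est_deriv_interchange] .
    have comp: "((\<lambda>e. \<Phi> (\<gamma> e)) has_derivative (\<lambda>e. LINT x|lborel. D\<phi> x (e, e *\<^sub>R IF))) (at 0 within {0..<\<epsilon>0})"
      using has_derivative_in_compose[OF \<gamma>d \<Phi>d] .
    have "(\<lambda>e. LINT x|lborel. D\<phi> x (e, e *\<^sub>R IF)) = (\<lambda>e. e *\<^sub>R (LINT x|lborel. D\<phi> x (1, IF)))"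
    proof
      fix e :: real
      have "(e, e *\<^sub>R IF) = e *\<^sub>R (1, IF)" by simp
      then show "(LINT x|lborel. D\<phi> x (e, e *\<^sub>R IF)) = e *\<^sub>R (LINT x|lborel. D\<phi> x (1, IF))"
        using linear_cmul[OF lin, of e "(1, IF)"] by simp
    qed
    with comp have v1: "((\<lambda>e. \<Phi> (\<gamma> e)) has_vector_derivative (LINT x|lborel. D\<phi> x (1, IF))) (at 0 within {0..<\<epsilon>0})"
      by (simp add: has_vector_derivative_def)
    have v2: "((\<lambda>e. \<Phi> (\<gamma> e)) has_vector_derivative 0) (at 0 within {0..<\<epsilon>0})"
    proof (rule has_vector_derivative_transform_within[of "\<lambda>e. 0" _ _ _ 1])
      show "((\<lambda>e. 0) has_vector_derivative 0) (at 0 within {0..<\<epsilon>0})" by simp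
    qed (use \<epsilon>0 T_est in \<open>auto simp: \<Phi>_def \<gamma>_def\<close>)
    show ?thesis using vector_derivative_unique_within[OF at0_notbot[OF \<epsilon>0(1)] v1 v2] .
  qed
  have "(LINT x|lborel. D\<phi> x (1, IF)) = (LINT x|lborel. a x - b x - c x *v IF)"
    using S8 by simp
  also have "\<dots> = (LINT x|lborel. a x) - (LINT x|lborel. b x) - (LINT x|lborel. c x) *v IF"
    using S5 S6 S7 integral_bounded_linear[OF bl_mv, of lborel c IF]
      integrable_bounded_linear[OF bl_mv, of lborel c IF]
    by (simp add: integral_diff)
  finally have "p y powr \<alpha> *\<^sub>R (M \<theta> *v u y) + L - (M \<theta> *v \<xi> + L) - (M \<theta> ** J) *v IF = 0"
    using S5 S6 S7 S9 by simp
  then have "M \<theta> *v (J *v IF) = M \<theta> *v (p y powr \<alpha> *\<^sub>R u y - \<xi>)"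
    by (simp add: matrix_vector_mul_assoc mv_scale algebra_simps)
  then have "J *v IF = p y powr \<alpha> *\<^sub>R u y - \<xi>"
    using inj_matrix_vector_mult[OF M_nonsing] by (auto dest: injD)
  then have "matrix_inv J *v (J *v IF) = matrix_inv J *v (p y powr \<alpha> *\<^sub>R u y - \<xi>)" by simp
  then show ?thesis
    using matrix_inv_left'[OF J_nonsing]
    by (simp add: matrix_vector_mul_assoc J_def \<xi>_def p_def u_def)
qed

end
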